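(* Let $\mathcal{P}=\{\mathsf{R}\}$ with $\mathrm{ar}(\mathsf{R})=1$ and $[\![\mathsf{R}]\!]\subseteq\mathbb{N}$ rich. Let $n\in\mathbb{N}$ and let $\psi\in\mathrm{FOC}(\mathcal{P}\cup\{\mathsf{P}_\exists\})[\sigma_{\mathrm{tree}}]$ be a linear hnf-sentence such that for all $\mathcal{T}_n$-forests $\mathcal{F}$ we have $\mathcal{F}\models\psi\iff P_{[\![\mathsf{R}]\!]}(\mathcal{F})$. Then the number of distinct atomic numerical oc-type conditions of the form $\mathsf{R}(t)$ in $\psi$ is at least the number of non-empty sets $B\subseteq\mu(\mathcal{T}_n)$.
   Context: $\sigma_{\mathrm{tree}}=\{E_0,E_1,X\}$ with $E_0,E_1$ binary, $X$ unary. $\mathcal{T}_n$ is the set of all structures $T=(D,E_0,E_1,X)$ where $D$ is the set of binary words of length at most $2^n$, $E_b=\{(w,wb):wb\in D\}$ for $b\in\{0,1\}$, and $X\subseteq D$ arbitrary. $T$ is marked if the empty word $\varepsilon\in X$, unmarked otherwise; $\mu(T)$ is $T$ with $X$ replaced by $X\cup\{\varepsilon\}$, $\mu(\mathcal{T}_n)=\{\mu(T):T\in\mathcal{T}_n\}$. A $\mathcal{T}_n$-forest is a disjoint union of finitely many copies of trees from $\mathcal{T}_n$. For $R\subseteq\mathbb{N}$, $P_R(\mathcal{F})$ is the property: the number of unmarked trees $T$ (counted with multiplicity of copies) in $\mathcal{F}$ such that $\mu(T)$ also appears in $\mathcal{F}$ belongs to $R$. A set $R\subseteq\mathbb{N}$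 is rich if for all $s,u,v\in\mathbb{N}$, $\bar a_0\in\{0,1\}^s\setminus\{\bar0\}$, $\bar a_1,\dots,\bar a_u\in\mathbb{N}^s$, $c_1,\dots,c_u\in\mathbb{N}$ with $(\bar a_0,0)\ne(\bar a_i,c_i)$ for all $i$, there exist $\bar x,\bar y\in(v+\mathbb{N})^s$ with $\bar a_0^\top\bar x\in R\iff\bar a_0^\top\bar y\notin R$ and $\bar a_i^\top\bar x-c_i\in R\iff\bar a_i^\top\bar y-c_i\in R$ for all $i\in\{1,\dots,u\}$. $\mathsf{P}_\exists$ is the unary predicate with semantics $\{1,2,\dots\}$. $\mathrm{FOC}(\mathcal{Q})[\sigma]$: formulas and counting terms built from atomic first-order formulas, $\neg,\vee$, $\exists y$, $\mathsf{P}(t_1,\dots,t_m)$ (true iff the values of the counting terms lie in $[\![\mathsf{P}]\!]$), counting terms $\#\bar y.\varphi$ (number of tuples satisfying $\varphi$), integers, $+$, $\cdot$. A counting term is linear if it is an integer $i\in\mathbb{N}$ or of the form $\sum_{j=1}^m b_j\cdot\#(y).\varphi_j-b_0$ with $b_0,\dots,b_m\in\mathbb{N}$; a formula is linear if it only uses linear counting terms. An $r$-type with one centre is a structure with a distinguished element such that every element is within Gaifman distance $r$ of it (Gaifman graph: edges between distinct elements occurring together in a tuple); $\mathrm{sph}_\tau(y)$ is a first-order formula stating that the substructure induced on the elements within distance $r$ of $y$, centred at $y$, is isomorphic to $\tau$. Basic counting terms are $\#(y).\mathrm{sph}_\tau(y)$; simple counting terms are integer polynomials in them; atomic numerical oc-type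 conditions are $\mathsf{P}(t_1,\dots,t_m)$ with $\mathsf{P}\in\mathcal{P}\cup\{\mathsf{P}_\exists\}$ and simple counting terms $t_i$; a hnf-sentence of $\mathrm{FOC}(\mathcal{P}\cup\{\mathsf{P}_\exists\})$ is a Boolean combination of atomic numerical oc-type conditions. The number of distinct atomic numerical oc-type conditions of the form $\mathsf{R}(t)$ in $\psi$ is the number of distinct such conditions $\psi$ is a Boolean combination of. *)

theory Defs
  imports Main
begin

record 'a sstruct =
  univ :: "'a set"
  e0 :: "('a \<times> 'a) set"
  e1 :: "('a \<times> 'a) set"
  xs :: "'a set"

definition wf_struct :: "'a sstruct \<Rightarrow> bool" where
  "wf_struct A \<longleftrightarrow> finite (univ A) \<and> e0 A \<subseteq> univ A \<times> univ A
     \<and> e1 A \<subseteq> univ A \<times> univ A \<and> xs A \<subseteq> univ A"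

definition gaif :: "'a sstruct \<Rightarrow> ('a \<times> 'a) set" where
  "gaif A = {(u,v). u \<noteq> v \<and> ((u,v) \<in> e0 A \<union> e1 A \<or> (v,u) \<in> e0 A \<union> e1 A)}"

definition ball :: "'a sstruct \<Rightarrow> nat \<Rightarrow> 'a \<Rightarrow> 'a set" where
  "ball A r c = {y \<in> univ A. \<exists>k\<le>r. (c, y) \<in> (gaif A) ^^ k}"

definition induced :: "'a sstruct \<Rightarrow> 'a set \<Rightarrow> 'a sstruct" where
  "induced A S = \<lparr>univ = S, e0 = e0 A \<inter> S \<times> S, e1 = e1 A \<inter> S \<times> S, xs = xs A \<inter> S\<rparr>"

definition piso :: "'a sstruct \<Rightarrow> 'a \<Rightarrow> 'b sstruct \<Rightarrow> 'b \<Rightarrow> bool" where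
  "piso A c B d \<longleftrightarrow> (\<exists>f. bij_betw f (univ A) (univ B) \<and> f c = d
     \<and> (\<forall>x\<in>univ A. \<forall>y\<in>univ A. ((x,y) \<in> e0 A \<longleftrightarrow> (f x, f y) \<in> e0 B)
                               \<and> ((x,y) \<in> e1 A \<longleftrightarrow> (f x, f y) \<in> e1 B))
     \<and> (\<forall>x\<in>univ A. x \<in> xs A \<longleftrightarrow> f x \<in> xs B))"

text \<open>An r-type with one centre: (r, structure, centre), every element within
  Gaifman distance r of the centre.\<close>
type_synonym otype = "nat \<times> nat sstruct \<times> nat"

fun wf_type :: "otype \<Rightarrow> bool" where
  "wf_type (r, S, c) \<longleftrightarrow> wf_struct S \<and> c \<in> univ S \<and> univ S \<subseteq> ball S r c"

fun count_type :: "'a sstruct \<Rightarrow> otype \<Rightarrow> nat" where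
  "count_type A (r, S, c) = card {y \<in> univ A. piso (induced A (ball A r y)) y S c}"

text \<open>Linear simple counting terms: a natural number i, or
  sum_j b_j * #(y).sph_tau_j(y) - b_0.\<close>
datatype 't lterm = LConst nat | LSum "(nat \<times> 't) list" nat

datatype pred = PR | PEx

datatype 't hnf = Atom pred "'t lterm" | Neg "'t hnf" | Disj "'t hnf" "'t hnf"

fun lval :: "'a sstruct \<Rightarrow> otype lterm \<Rightarrow> int" where
  "lval A (LConst k) = int k"
| "lval A (LSum bs b0) = (\<Sum>(b, \<tau>)\<leftarrow>bs. int b * int (count_type A \<tau>)) - int b0"

definition inR :: "nat set \<Rightarrow> int \<Rightarrow> bool" where
  "inR R z \<longleftrightarrow> z \<ge> 0 \<and> nat z \<in> R"

fun hsat :: "nat set \<Rightarrow> 'a sstruct \<Rightarrow> otype hnf \<Rightarrow> bool" where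
  "hsat R A (Atom PR t) = inR R (lval A t)"
| "hsat R A (Atom PEx t) = (lval A t \<ge> 1)"
| "hsat R A (Neg \<phi>) = (\<not> hsat R A \<phi>)"
| "hsat R A (Disj \<phi> \<chi>) = (hsat R A \<phi> \<or> hsat R A \<chi>)"

definition wf_hnf :: "otype hnf \<Rightarrow> bool" where
  "wf_hnf \<psi> \<longleftrightarrow> (\<forall>\<tau>\<in>set_hnf \<psi>. wf_type \<tau>)"

fun atomsR :: "'t hnf \<Rightarrow> 't lterm set" where
  "atomsR (Atom PR t) = {t}"
| "atomsR (Atom PEx t) = {}"
| "atomsR (Neg \<phi>) = atomsR \<phi>"
| "atomsR (Disj \<phi> \<chi>) = atomsR \<phi> \<union> atomsR \<chi>"

text \<open>Types are identified up to isomorphism (types are isomorphism classes).\<close>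
fun tcls :: "otype \<Rightarrow> nat \<times> (nat sstruct \<times> nat) set" where
  "tcls (r, S, c) = (r, {(S', c'). piso S' c' S c})"

definition num_R_conditions :: "otype hnf \<Rightarrow> nat" where
  "num_R_conditions \<psi> = card (map_lterm tcls ` atomsR \<psi>)"

definition dotp :: "nat \<Rightarrow> (nat \<Rightarrow> nat) \<Rightarrow> (nat \<Rightarrow> nat) \<Rightarrow> int" where
  "dotp s a x = (\<Sum>j<s. int (a j) * int (x j))"

definition rich :: "nat set \<Rightarrow> bool" where
  "rich R \<longleftrightarrow> (\<forall>s u v (a :: nat \<Rightarrow> nat \<Rightarrow> nat) (c :: nat \<Rightarrow> nat).
     (\<forall>j<s. a 0 j \<le> 1) \<and> (\<exists>j<s. a 0 j \<noteq> 0)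
     \<and> (\<forall>i\<in>{1..u}. (\<exists>j<s. a 0 j \<noteq> a i j) \<or> c i \<noteq> 0)
     \<longrightarrow> (\<exists>x y :: nat \<Rightarrow> nat. (\<forall>j<s. v \<le> x j \<and> v \<le> y j)
           \<and> (inR R (dotp s (a 0) x) \<longleftrightarrow> \<not> inR R (dotp s (a 0) y))
           \<and> (\<forall>i\<in>{1..u}. inR R (dotp s (a i) x - int (c i))
                            \<longleftrightarrow> inR R (dotp s (a i) y - int (c i)))))"

definition Dn :: "nat \<Rightarrow> bool list set" where
  "Dn n = {w. length w \<le> 2 ^ n}"

text \<open>Bit 0 is False, bit 1 is True.\<close>
definition tree :: "nat \<Rightarrow> bool list set \<Rightarrow> bool list sstruct" where
  "tree n X = \<lparr>univ = Dn n,
     e0 = {(w, w @ [False]) | w. w @ [False] \<in> Dn n},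
     e1 = {(w, w @ [True]) | w. w @ [True] \<in> Dn n},
     xs = X\<rparr>"

definition Tn :: "nat \<Rightarrow> bool list sstruct set" where
  "Tn n = {tree n X | X. X \<subseteq> Dn n}"

definition marked :: "bool list sstruct \<Rightarrow> bool" where
  "marked T \<longleftrightarrow> [] \<in> xs T"

definition mu :: "bool list sstruct \<Rightarrow> bool list sstruct" where
  "mu T = T\<lparr>xs := xs T \<union> {[]}\<rparr>"

definition forest :: "'a sstruct list \<Rightarrow> (nat \<times> 'a) sstruct" where
  "forest Ts = \<lparr>univ = {(i, w). i < length Ts \<and> w \<in> univ (Ts ! i)},
     e0 = {((i, u), (i, w)) | i u w. i < length Ts \<and> (u, w) \<in> e0 (Ts ! i)},
     e1 = {((i, u), (i, w)) | i u w. i < length Ts \<and> (u, w) \<in> e1 (Ts ! i)},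
     xs = {(i, w). i < length Ts \<and> w \<in> xs (Ts ! i)}\<rparr>"

definition P_R :: "nat set \<Rightarrow> bool list sstruct list \<Rightarrow> bool" where
  "P_R R Ts \<longleftrightarrow>
     card {i. i < length Ts \<and> \<not> marked (Ts ! i) \<and> mu (Ts ! i) \<in> set Ts} \<in> R"

end

theory Submission
  imports Defs
begin


lemma piso_refl: "piso A a A a"
  unfolding piso_def by (rule exI[of _ id]) auto

lemma piso_trans:
  assumes "piso A a B b" "piso B b C c" shows "piso A a C c"
proof -
  obtain f where f: "bij_betw f (univ A) (univ B)" "f a = b"
     "\<forall>x\<in>univ A. \<forall>y\<in>univ A. ((x,y) \<in> e0 A \<longleftrightarrow> (f x, f y) \<in> e0 B) \<and> ((x,y) \<in> e1 A \<longleftrightarrow> (f x, f y) \<in> e1 B)"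
     "\<forall>x\<in>univ A. x \<in> xs A \<longleftrightarrow> f x \<in> xs B"
    using assms(1) unfolding piso_def by blast
  obtain g where g: "bij_betw g (univ B) (univ C)" "g b = c"
     "\<forall>x\<in>univ B. \<forall>y\<in>univ B. ((x,y) \<in> e0 B \<longleftrightarrow> (g x, g y) \<in> e0 C) \<and> ((x,y) \<in> e1 B \<longleftrightarrow> (g x, g y) \<in> e1 C)"
     "\<forall>x\<in>univ B. x \<in> xs B \<longleftrightarrow> g x \<in> xs C"
    using assms(2) unfolding piso_def by blast
  have fm: "\<And>x. x \<in> univ A \<Longrightarrow> f x \<in> univ B" using f(1) bij_betwE by blast
  show ?thesis unfolding piso_def
    apply (rule exI[of _ "g \<circ> f"])
    using f g fm bij_betw_trans[OF f(1) g(1)] by auto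
qed

lemma count_type_tcls:
  assumes "tcls \<tau> = tcls \<tau>'" shows "count_type A \<tau> = count_type A \<tau>'"
proof -
  obtain r S c where t: "\<tau> = (r,S,c)" by (cases \<tau>) auto
  obtain r' S' c' where t': "\<tau>' = (r',S',c')" by (cases \<tau>') auto
  have r: "r = r'" using arg_cong[OF assms, of fst] unfolding t t' tcls.simps fst_conv .
  have E: "{(S''::nat sstruct, c''). piso S'' c'' S c} = {(S'', c''). piso S'' c'' S' c'}"
    using arg_cong[OF assms, of snd] unfolding t t' tcls.simps snd_conv .
  have p1: "piso S c S' c'" using E piso_refl[of S c] by blast
  have p2: "piso S' c' S c" using E piso_refl[of S' c'] by blast
  have "\<And>(X::'a sstruct) y. piso X y S c = piso X y S' c'" using p1 p2 piso_trans by metis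
  then show ?thesis unfolding t t' r by simp
qed




lemma gaif_forest: "(((i,u),(j,w)) \<in> gaif (forest Ts)) \<longleftrightarrow> i = j \<and> i < length Ts \<and> (u,w) \<in> gaif (Ts!i)"
  by (auto simp: gaif_def forest_def)

lemma gaif_forest_pow: "(((i,u),(j,w)) \<in> gaif (forest Ts) ^^ k) \<longleftrightarrow> i = j \<and> (k = 0 \<or> i < length Ts) \<and> (u,w) \<in> gaif (Ts!i) ^^ k"
proof (induction k arbitrary: j w)
  case 0 then show ?case by auto
next
  case (Suc k)
  have "(((i,u),(j,w)) \<in> gaif (forest Ts) ^^ Suc k) \<longleftrightarrow> (\<exists>j' w'. ((i,u),(j',w')) \<in> gaif (forest Ts) ^^ k \<and> ((j',w'),(j,w)) \<in> gaif (forest Ts))"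
    by (auto simp: relpow.simps(2))
  also have "\<dots> \<longleftrightarrow> (\<exists>w'. i = j \<and> i < length Ts \<and> (u,w') \<in> gaif (Ts!i) ^^ k \<and> (w',w) \<in> gaif (Ts!i))"
    using Suc.IH gaif_forest by metis
  also have "\<dots> \<longleftrightarrow> i = j \<and> (Suc k = 0 \<or> i < length Ts) \<and> (u,w) \<in> gaif (Ts!i) ^^ Suc k"
    by (auto simp: relpow.simps(2))
  finally show ?case .
qed

lemma univ_forest: "univ (forest Ts) = {(i, w). i < length Ts \<and> w \<in> univ (Ts ! i)}"
  by (simp add: forest_def)

lemma ball_forest: assumes "i < length Ts"
  shows "ball (forest Ts) r (i,w) = Pair i ` ball (Ts!i) r w"
proof -
  have "y \<in> ball (forest Ts) r (i,w) \<longleftrightarrow> y \<in> Pair i ` ball (Ts!i) r w" for y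
  proof (cases y)
    case (Pair j v)
    show ?thesis unfolding Pair ball_def using assms
      by (auto simp: gaif_forest_pow univ_forest)
  qed
  then show ?thesis by blast
qed

lemma piso_forest1:
  assumes "i < length Ts"
  shows "piso (induced (Ts!i) Sb) w (induced (forest Ts) (Pair i ` Sb)) (i,w)"
  unfolding piso_def
  apply (rule exI[of _ "Pair i"])
  using assms by (auto simp: induced_def forest_def bij_betw_def inj_on_def)

lemma piso_forest2:
  assumes "i < length Ts"
  shows "piso (induced (forest Ts) (Pair i ` Sb)) (i,w) (induced (Ts!i) Sb) w"
  unfolding piso_def
  apply (rule exI[of _ "snd"])
  using assms by (auto simp: induced_def forest_def bij_betw_def inj_on_def image_iff)

lemma count_type_forest:
  assumes "\<forall>T\<in>set Ts. finite (univ T)"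
  shows "count_type (forest Ts) \<tau> = sum_list (map (\<lambda>T. count_type T \<tau>) Ts)"
proof -
  obtain r S c where t: "\<tau> = (r,S,c)" by (cases \<tau>) auto
  define Q where "Q i = {w \<in> univ (Ts!i). piso (induced (Ts!i) (ball (Ts!i) r w)) w S c}" for i
  have eq: "{y \<in> univ (forest Ts). piso (induced (forest Ts) (ball (forest Ts) r y)) y S c}
     = Sigma {..<length Ts} Q"
  proof (intro set_eqI)
    fix y show "y \<in> {y \<in> univ (forest Ts). piso (induced (forest Ts) (ball (forest Ts) r y)) y S c}
     \<longleftrightarrow> y \<in> Sigma {..<length Ts} Q"
    proof (cases y)
      case (Pair i w)
      show ?thesis
      proof (cases "i < length Ts")
        case True
        have "piso (induced (forest Ts) (ball (forest Ts) r (i,w))) (i,w) S c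
          \<longleftrightarrow> piso (induced (Ts!i) (ball (Ts!i) r w)) w S c"
          unfolding ball_forest[OF True]
          using piso_trans piso_forest1[OF True] piso_forest2[OF True] by metis
        then show ?thesis using True by (auto simp: Pair Q_def forest_def)
      next
        case False then show ?thesis by (auto simp: Pair Q_def forest_def)
      qed
    qed
  qed
  have "count_type (forest Ts) \<tau> = card (Sigma {..<length Ts} Q)"
    unfolding t count_type.simps eq ..
  also have "\<dots> = (\<Sum>i<length Ts. card (Q i))"
    by (rule card_SigmaI) (use assms in \<open>auto simp: Q_def\<close>)
  also have "\<dots> = (\<Sum>i<length Ts. count_type (Ts!i) \<tau>)"
    by (simp add: t Q_def)
  also have "\<dots> = sum_list (map (\<lambda>T. count_type T \<tau>) Ts)"
    by (simp add: sum_list_sum_nth atLeast0LessThan)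
  finally show ?thesis .
qed




fun atomsE :: "'t hnf \<Rightarrow> 't lterm set" where
  "atomsE (Atom PR t) = {}"
| "atomsE (Atom PEx t) = {t}"
| "atomsE (Neg \<phi>) = atomsE \<phi>"
| "atomsE (Disj \<phi> \<chi>) = atomsE \<phi> \<union> atomsE \<chi>"

fun cst :: "'t lterm \<Rightarrow> nat" where
  "cst (LConst k) = 0"
| "cst (LSum bs b) = b"

fun maxc :: "'t hnf \<Rightarrow> nat" where
  "maxc (Atom p t) = cst t"
| "maxc (Neg \<phi>) = maxc \<phi>"
| "maxc (Disj \<phi> \<chi>) = max (maxc \<phi>) (maxc \<chi>)"

lemma finite_atomsR: "finite (atomsR \<phi>)"
  by (induction \<phi> rule: atomsR.induct) auto

lemma atomsE_cst: "t \<in> atomsE \<phi> \<Longrightarrow> cst t \<le> maxc \<phi>"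
  by (induction \<phi> rule: atomsE.induct) auto

lemma hsat_cong:
  assumes "\<forall>t\<in>atomsR \<phi>. inR R (lval A t) \<longleftrightarrow> inR R (lval A' t)"
    and "\<forall>t\<in>atomsE \<phi>. (lval A t \<ge> 1) \<longleftrightarrow> (lval A' t \<ge> 1)"
  shows "hsat R A \<phi> = hsat R A' \<phi>"
  using assms by (induction R A \<phi> rule: hsat.induct) auto

definition G :: "(nat \<times> otype) list \<Rightarrow> 'a sstruct \<Rightarrow> nat" where
  "G bs T = (\<Sum>(b, \<tau>)\<leftarrow>bs. b * count_type T \<tau>)"

lemma lval_forest_aux:
  fixes Ts :: "'a sstruct list"
  shows
  "(\<Sum>(b, \<tau>)\<leftarrow>bs. int b * int (sum_list (map (\<lambda>T. count_type T \<tau>) Ts)))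
     = int (sum_list (map (G bs) Ts))"
proof (induction bs)
  case Nil then show ?case by (simp add: G_def)
next
  case (Cons p bs)
  obtain b \<tau> where p: "p = (b, \<tau>)" by (cases p) auto
  have "G (p # bs) = (\<lambda>T::'a sstruct. b * count_type T \<tau> + G bs T)"
    by (rule ext) (simp add: G_def p)
  then have "sum_list (map (G (p # bs)) Ts) = sum_list (map (\<lambda>T. b * count_type T \<tau> + G bs T) Ts)"
    by simp
  also have "\<dots> = b * sum_list (map (\<lambda>T. count_type T \<tau>) Ts) + sum_list (map (G bs) Ts)"
    by (simp add: sum_list_addf sum_list_const_mult)
  finally show ?case using Cons by (simp add: p)
qed

lemma lval_forest:
  assumes "\<forall>T\<in>set Ts. finite (univ T)"
  shows "lval (forest Ts) (LSum bs b0) = int (sum_list (map (G bs) Ts)) - int b0"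
  using count_type_forest[OF assms] lval_forest_aux by simp

lemma sum_concat_rep:
  "sum_list (map f (concat (map (\<lambda>j. replicate (k j) (g j)) js))) = (\<Sum>j\<leftarrow>js. k j * f (g j))"
  by (induction js) (auto simp: sum_list_replicate)

lemma length_filter_sum: "length (filter P zs) = sum_list (map (\<lambda>x. if P x then 1 else 0) zs)"
  by (induction zs) auto

definition allowed :: "bool list sstruct set \<Rightarrow> bool list sstruct \<Rightarrow> bool" where
  "allowed B T \<longleftrightarrow> \<not> marked T \<or> T \<in> B"

definition mm where "mm L B (x::nat\<Rightarrow>nat) j = (if allowed B (L!j) then x j else 0)"

definition TsOf where "TsOf L B x = concat (map (\<lambda>j. replicate (mm L B x j) (L!j)) [0..<length L])"

definition coef :: "bool list sstruct list \<Rightarrow> bool list sstruct set \<Rightarrow> otype lterm \<Rightarrow> nat \<Rightarrow> nat" where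
  "coef L B t j = (case t of LConst k \<Rightarrow> 0 | LSum bs b0 \<Rightarrow> if allowed B (L!j) then G bs (L!j) else 0)"

definition a0 where "a0 L B j = (if \<not> marked (L!j) \<and> mu (L!j) \<in> B then 1 else (0::nat))"

lemma sum_upt_conv: "(\<Sum>j\<leftarrow>[0..<s]. f j) = (\<Sum>j<s. f j)"
  by (simp add: interv_sum_list_conv_sum_set_nat atLeast0LessThan)

lemma set_TsOf_sub: "set (TsOf L B x) \<subseteq> set L"
  by (auto simp: TsOf_def)

lemma set_TsOf:
  assumes "\<forall>j<length L. x j \<ge> 1"
  shows "set (TsOf L B x) = {T \<in> set L. allowed B T}"
proof
  show "set (TsOf L B x) \<subseteq> {T \<in> set L. allowed B T}"
    by (auto simp: TsOf_def mm_def split: if_splits)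
next
  show "{T \<in> set L. allowed B T} \<subseteq> set (TsOf L B x)"
  proof
    fix T assume "T \<in> {T \<in> set L. allowed B T}"
    then obtain j where j: "j < length L" "L!j = T" "allowed B T" by (auto simp: in_set_conv_nth)
    then have "mm L B x j \<noteq> 0" using assms by (auto simp: mm_def)
    then show "T \<in> set (TsOf L B x)" using j by (auto simp: TsOf_def)
  qed
qed

lemma lval_TsOf:
  assumes "\<forall>T\<in>set L. finite (univ T)"
  shows "lval (forest (TsOf L B x)) (LSum bs b0) = dotp (length L) (coef L B (LSum bs b0)) x - int b0"
proof -
  have f: "\<forall>T\<in>set (TsOf L B x). finite (univ T)" using assms set_TsOf_sub by blast
  have "sum_list (map (G bs) (TsOf L B x)) = (\<Sum>j<length L. mm L B x j * G bs (L!j))"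
    unfolding TsOf_def sum_concat_rep sum_upt_conv ..
  then have "int (sum_list (map (G bs) (TsOf L B x))) = dotp (length L) (coef L B (LSum bs b0)) x"
    unfolding dotp_def by (auto simp: mm_def coef_def intro!: sum.cong)
  then show ?thesis using lval_forest[OF f] by simp
qed

lemma PR_TsOf:
  assumes "\<forall>j<length L. x j \<ge> 1" and "\<forall>T\<in>set L. mu T \<in> set L"
    and "B \<subseteq> set L" and "\<forall>T\<in>B. marked T" and "\<forall>T. marked (mu T)"
  shows "P_R R (TsOf L B x) \<longleftrightarrow> inR R (dotp (length L) (a0 L B) x)"
proof -
  let ?Ts = "TsOf L B x"
  let ?Q = "\<lambda>T. \<not> marked T \<and> mu T \<in> set ?Ts"
  have "card {i. i < length ?Ts \<and> \<not> marked (?Ts ! i) \<and> mu (?Ts ! i) \<in> set ?Ts}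
      = length (filter ?Q ?Ts)"
    by (simp add: length_filter_conv_card)
  also have "\<dots> = (\<Sum>j<length L. mm L B x j * (if ?Q (L!j) then 1 else 0))"
    unfolding length_filter_sum TsOf_def sum_concat_rep sum_upt_conv ..
  also have "\<dots> = (\<Sum>j<length L. a0 L B j * x j)"
  proof (rule sum.cong[OF refl])
    fix j assume "j \<in> {..<length L}"
    then have j: "j < length L" by simp
    have mL: "mu (L!j) \<in> set L" using assms(2) j by auto
    have "mu (L!j) \<in> set ?Ts \<longleftrightarrow> mu (L!j) \<in> set L \<and> allowed B (mu (L!j))"
      using set_TsOf[OF assms(1)] by simp
    also have "\<dots> \<longleftrightarrow> mu (L!j) \<in> B" using mL assms(5) by (simp add: allowed_def)
    finally show "mm L B x j * (if ?Q (L!j) then 1 else 0) = a0 L B j * x j"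
      by (auto simp: mm_def a0_def allowed_def)
  qed
  finally have eq: "int (card {i. i < length ?Ts \<and> \<not> marked (?Ts ! i) \<and> mu (?Ts ! i) \<in> set ?Ts})
     = dotp (length L) (a0 L B) x" unfolding dotp_def by simp
  show ?thesis unfolding P_R_def inR_def eq[symmetric] by simp
qed




lemma exists_good:
  assumes rich: "rich R"
    and fin: "\<forall>T\<in>set L. finite (univ T)"
    and muc: "\<forall>T\<in>set L. mu T \<in> set L"
    and mk: "\<forall>T. marked (mu T)"
    and BL: "B \<subseteq> set L" and Bm: "\<forall>T\<in>B. marked T"
    and nz: "\<exists>j<length L. a0 L B j \<noteq> 0"
    and hyp: "\<forall>x. (\<forall>j<length L. x j \<ge> 1) \<longrightarrow> (hsat R (forest (TsOf L B x)) \<psi> \<longleftrightarrow> P_R R (TsOf L B x))"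
  shows "\<exists>t\<in>atomsR \<psi>. \<exists>bs. t = LSum bs 0 \<and> (\<forall>j<length L. coef L B t j = a0 L B j)"
proof (rule ccontr)
  assume neg: "\<not> ?thesis"
  obtain ts where ts: "set ts = atomsR \<psi>" using finite_list[OF finite_atomsR] by blast
  define s where "s = length L"
  define u where "u = length ts"
  define a where "a i = (if i = 0 then a0 L B else coef L B (ts!(i-1)))" for i
  define c where "c i = (if i = 0 then 0 else cst (ts!(i-1)))" for i
  define v where "v = Suc (maxc \<psi>)"
  have p1: "\<forall>j<s. a 0 j \<le> 1" by (simp add: a_def a0_def)
  have p2: "\<exists>j<s. a 0 j \<noteq> 0" using nz by (simp add: a_def s_def)
  have p3: "\<forall>i\<in>{1..u}. (\<exists>j<s. a 0 j \<noteq> a i j) \<or> c i \<noteq> 0"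
  proof
    fix i assume i: "i \<in> {1..u}"
    then have tin: "ts!(i-1) \<in> atomsR \<psi>" using ts by (auto simp: u_def)
    show "(\<exists>j<s. a 0 j \<noteq> a i j) \<or> c i \<noteq> 0"
    proof (cases "ts!(i-1)")
      case (LConst k)
      then show ?thesis using i nz by (auto simp: a_def coef_def s_def)
    next
      case (LSum bs b0)
      show ?thesis
      proof (cases "b0 = 0")
        case False then show ?thesis using i LSum by (simp add: c_def)
      next
        case True
        then have "\<not> (\<forall>j<length L. coef L B (ts!(i-1)) j = a0 L B j)"
          using neg tin LSum by auto
        then show ?thesis using i by (auto simp: a_def s_def)
      qed
    qed
  qed
  obtain x y where xy: "\<forall>j<s. v \<le> x j \<and> v \<le> y j"
    and d0: "inR R (dotp s (a 0) x) \<longleftrightarrow> \<not> inR R (dotp s (a 0) y)"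
    and di: "\<forall>i\<in>{1..u}. inR R (dotp s (a i) x - int (c i)) \<longleftrightarrow> inR R (dotp s (a i) y - int (c i))"
    using rich[unfolded rich_def, rule_format, of s a u c v, OF conjI[OF p1 conjI[OF p2 p3]]] by (elim exE conjE) blast
  have x1: "\<forall>j<length L. x j \<ge> 1" and y1: "\<forall>j<length L. y j \<ge> 1"
    using xy by (auto simp: v_def s_def)
  let ?Fx = "forest (TsOf L B x)" and ?Fy = "forest (TsOf L B y)"
  have dotp_ge: "dotp s f z \<ge> int (f j) * int (z j)" if "j < s" for f z j
    unfolding dotp_def by (rule member_le_sum) (use that in auto)
  have dotp_nn: "dotp s f z \<ge> 0" for f z unfolding dotp_def by (rule sum_nonneg) auto
  have hR: "\<forall>t\<in>atomsR \<psi>. inR R (lval ?Fx t) \<longleftrightarrow> inR R (lval ?Fy t)"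
  proof
    fix t assume "t \<in> atomsR \<psi>"
    then have "t \<in> set ts" using ts by simp
    then obtain k where k: "k < u" "ts!k = t" by (auto simp: u_def in_set_conv_nth)
    define i where "i = Suc k"
    have i: "i \<in> {1..u}" "ts!(i-1) = t" using k by (auto simp: i_def)
    show "inR R (lval ?Fx t) \<longleftrightarrow> inR R (lval ?Fy t)"
    proof (cases t)
      case (LConst k) then show ?thesis by simp
    next
      case (LSum bs b0)
      have "lval ?Fx t = dotp s (a i) x - int (c i)" "lval ?Fy t = dotp s (a i) y - int (c i)"
        using i LSum lval_TsOf[OF fin] by (auto simp: a_def c_def s_def)
      then show ?thesis using di i by simp
    qed
  qed
  have hE: "\<forall>t\<in>atomsE \<psi>. (lval ?Fx t \<ge> 1) \<longleftrightarrow> (lval ?Fy t \<ge> 1)"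
  proof
    fix t assume tE: "t \<in> atomsE \<psi>"
    show "(lval ?Fx t \<ge> 1) \<longleftrightarrow> (lval ?Fy t \<ge> 1)"
    proof (cases t)
      case (LConst k) then show ?thesis by simp
    next
      case (LSum bs b0)
      have b0: "b0 < v" using atomsE_cst[OF tE] unfolding LSum v_def by simp
      have ex: "lval ?Fx t = dotp s (coef L B t) x - int b0" "lval ?Fy t = dotp s (coef L B t) y - int b0"
        unfolding LSum s_def by (rule lval_TsOf[OF fin])+
      show ?thesis
      proof (cases "\<exists>j<s. coef L B t j \<noteq> 0")
        case True
        then obtain j where j: "j < s" "coef L B t j \<ge> 1" by auto
        have "dotp s (coef L B t) z \<ge> int v" if zv: "\<forall>j<s. v \<le> z j" for z
        proof -
          have "z j \<le> coef L B t j * z j" using j(2) by simp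
          then have "v \<le> coef L B t j * z j" using zv j(1) by (meson order_trans)
          then have "int v \<le> int (coef L B t j) * int (z j)" by (simp only: of_nat_mult[symmetric] of_nat_le_iff)
          then show ?thesis using dotp_ge[OF j(1), of "coef L B t" z] by linarith
        qed
        then have "dotp s (coef L B t) x \<ge> int v" "dotp s (coef L B t) y \<ge> int v" using xy by auto
        then show ?thesis using ex b0 by simp
      next
        case False
        then have "dotp s (coef L B t) x = 0" "dotp s (coef L B t) y = 0"
          by (simp_all add: dotp_def)
        then show ?thesis using ex by simp
      qed
    qed
  qed
  have "hsat R ?Fx \<psi> = hsat R ?Fy \<psi>" by (rule hsat_cong[OF hR hE])
  then have "P_R R (TsOf L B x) = P_R R (TsOf L B y)" using hyp x1 y1 by blast
  then have "inR R (dotp s (a 0) x) = inR R (dotp s (a 0) y)"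
    using PR_TsOf[OF x1 muc BL Bm mk] PR_TsOf[OF y1 muc BL Bm mk] by (simp add: a_def s_def)
  then show False using d0 by blast
qed




lemma G_tcls: "map (map_prod id tcls) bs = map (map_prod id tcls) bs' \<Longrightarrow> G bs T = G bs' T"
proof (induction bs arbitrary: bs')
  case Nil then show ?case by simp
next
  case (Cons p bs)
  then obtain p' bs2 where b': "bs' = p' # bs2" by (cases bs') auto
  obtain b \<tau> where p: "p = (b,\<tau>)" by (cases p) auto
  obtain b' \<tau>' where p': "p' = (b',\<tau>')" by (cases p') auto
  have "b = b'" "tcls \<tau> = tcls \<tau>'" "map (map_prod id tcls) bs = map (map_prod id tcls) bs2"
    using Cons.prems by (auto simp: b' p p' id_def)
  then have e1: "count_type T \<tau> = count_type T \<tau>'" and e2: "G bs T = G bs2 T"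
    using count_type_tcls Cons.IH by blast+
  have "G (p # bs) T = b * count_type T \<tau> + G bs T" by (simp add: G_def p)
  moreover have "G bs' T = b' * count_type T \<tau>' + G bs2 T" by (simp add: G_def p' b')
  ultimately show ?case using e1 e2 \<open>b = b'\<close> by simp
qed

lemma finite_Dn: "finite (Dn n)"
proof -
  have "Dn n = {w. set w \<subseteq> UNIV \<and> length w \<le> 2 ^ n}" by (auto simp: Dn_def)
  then show ?thesis using finite_lists_length_le[of "UNIV :: bool set"] by simp
qed

lemma finite_Tn: "finite (Tn n)"
proof -
  have "Tn n = tree n ` Pow (Dn n)" by (auto simp: Tn_def)
  then show ?thesis using finite_Dn by simp
qed

lemma univ_Tn: "T \<in> Tn n \<Longrightarrow> univ T = Dn n"
  by (auto simp: Tn_def tree_def)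

lemma mu_tree: "mu (tree n X) = tree n (X \<union> {[]})"
  by (simp add: mu_def tree_def)

lemma mu_Tn: "T \<in> Tn n \<Longrightarrow> mu T \<in> Tn n"
  by (auto simp: Tn_def mu_tree Dn_def)

lemma marked_mu: "marked (mu T)"
  by (simp add: marked_def mu_def)

lemma unmark: "T0 \<in> Tn n \<Longrightarrow> \<exists>T1\<in>Tn n. \<not> marked T1 \<and> mu T1 = mu T0"
proof -
  assume "T0 \<in> Tn n"
  then obtain X where X: "T0 = tree n X" "X \<subseteq> Dn n" by (auto simp: Tn_def)
  have "tree n (X - {[]}) \<in> Tn n" using X by (auto simp: Tn_def)
  moreover have "\<not> marked (tree n (X - {[]}))" by (simp add: marked_def tree_def)
  moreover have "mu (tree n (X - {[]})) = mu T0" using X by (simp add: mu_tree)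
  ultimately show ?thesis by blast
qed

theorem lemma6p5:
  fixes R :: "nat set" and n :: nat and \<psi> :: "otype hnf"
  assumes "rich R"
    and "wf_hnf \<psi>"
    and "\<forall>Ts. set Ts \<subseteq> Tn n \<longrightarrow> (hsat R (forest Ts) \<psi> \<longleftrightarrow> P_R R Ts)"
  shows "card {B. B \<subseteq> mu ` Tn n \<and> B \<noteq> {}} \<le> num_R_conditions \<psi>"
proof -
  obtain L where L: "set L = Tn n" using finite_list[OF finite_Tn] by blast
  have fin: "\<forall>T\<in>set L. finite (univ T)" using L univ_Tn finite_Dn by auto
  have muc: "\<forall>T\<in>set L. mu T \<in> set L" using L mu_Tn by auto
  have mk: "\<forall>T. marked (mu T)" using marked_mu by auto
  define S where "S = {B. B \<subseteq> mu ` Tn n \<and> B \<noteq> {}}"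
  define good where "good B t \<longleftrightarrow> t \<in> atomsR \<psi> \<and> (\<exists>bs. t = LSum bs 0 \<and> (\<forall>j<length L. coef L B t j = a0 L B j))" for B t
  have ex: "\<exists>t. good B t" if B: "B \<in> S" for B
  proof -
    have BL: "B \<subseteq> set L" using B muc L by (auto simp: S_def)
    have Bm: "\<forall>T\<in>B. marked T" using B mk by (auto simp: S_def)
    have nz: "\<exists>j<length L. a0 L B j \<noteq> 0"
    proof -
      obtain X where X: "X \<in> B" using B by (auto simp: S_def)
      then obtain T0 where T0: "T0 \<in> Tn n" "X = mu T0" using B by (auto simp: S_def)
      obtain T1 where T1: "T1 \<in> Tn n" "\<not> marked T1" "mu T1 = mu T0" using unmark[OF T0(1)] by blast
      obtain j where j: "j < length L" "L!j = T1" using T1(1) L by (metis in_set_conv_nth)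
      have "a0 L B j \<noteq> 0" using j T1 T0 X by (simp add: a0_def)
      then show ?thesis using j by blast
    qed
    have hyp: "\<forall>x. (\<forall>j<length L. x j \<ge> 1) \<longrightarrow> (hsat R (forest (TsOf L B x)) \<psi> \<longleftrightarrow> P_R R (TsOf L B x))"
    proof (intro allI impI)
      fix x :: "nat \<Rightarrow> nat"
      have "set (TsOf L B x) \<subseteq> Tn n" using set_TsOf_sub[of L B x] L by simp
      then show "hsat R (forest (TsOf L B x)) \<psi> \<longleftrightarrow> P_R R (TsOf L B x)"
        using assms(3) by simp
    qed
    show ?thesis using exists_good[OF assms(1) fin muc mk BL Bm nz hyp] unfolding good_def by blast
  qed
  define tB where "tB B = (SOME t. good B t)" for B
  have tBg: "good B (tB B)" if "B \<in> S" for B unfolding tB_def using ex[OF that] by (rule someI_ex)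
  have key: "\<exists>bs. tB B = LSum bs 0 \<and> (\<forall>T\<in>Tn n. \<not> marked T \<longrightarrow> G bs T = (if mu T \<in> B then 1 else 0))"
    if B: "B \<in> S" for B
  proof -
    obtain bs where bs: "tB B = LSum bs 0" "\<forall>j<length L. coef L B (tB B) j = a0 L B j"
      using tBg[OF B] unfolding good_def by blast
    have "G bs T = (if mu T \<in> B then 1 else 0)" if T: "T \<in> Tn n" "\<not> marked T" for T
    proof -
      obtain j where j: "j < length L" "L!j = T" using T(1) L by (metis in_set_conv_nth)
      show ?thesis using bs(2) j T(2) by (auto simp: bs(1) coef_def a0_def allowed_def)
    qed
    then show ?thesis using bs(1) by blast
  qed
  have sub: "B \<subseteq> B'" if B: "B \<in> S" and B': "B' \<in> S" and eq: "map_lterm tcls (tB B) = map_lterm tcls (tB B')" for B B'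
  proof
    obtain bs where bs: "tB B = LSum bs 0" "\<forall>T\<in>Tn n. \<not> marked T \<longrightarrow> G bs T = (if mu T \<in> B then 1 else 0)"
      using key[OF B] by blast
    obtain bs' where bs': "tB B' = LSum bs' 0" "\<forall>T\<in>Tn n. \<not> marked T \<longrightarrow> G bs' T = (if mu T \<in> B' then 1 else 0)"
      using key[OF B'] by blast
    have m: "map (map_prod id tcls) bs = map (map_prod id tcls) bs'" using eq bs(1) bs'(1) by (simp add: id_def)
    fix X assume X: "X \<in> B"
    then obtain T0 where T0: "T0 \<in> Tn n" "X = mu T0" using B by (auto simp: S_def)
    obtain T1 where T1: "T1 \<in> Tn n" "\<not> marked T1" "mu T1 = mu T0" using unmark[OF T0(1)] by blast
    have "G bs T1 = 1" using bs(2) T1 T0 X by simp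
    then have "G bs' T1 = 1" using G_tcls[OF m, of T1] by simp
    then have "mu T1 \<in> B'" using bs'(2) T1 by (auto split: if_splits)
    then show "X \<in> B'" using T0 T1 by simp
  qed
  have inj: "inj_on (\<lambda>B. map_lterm tcls (tB B)) S"
  proof (rule inj_onI)
    fix B B' assume B: "B \<in> S" and B': "B' \<in> S" and eq: "map_lterm tcls (tB B) = map_lterm tcls (tB B')"
    show "B = B'" by (rule subset_antisym[OF sub[OF B B' eq] sub[OF B' B eq[symmetric]]])
  qed
  have img: "(\<lambda>B. map_lterm tcls (tB B)) ` S \<subseteq> map_lterm tcls ` atomsR \<psi>"
  proof (rule image_subsetI)
    fix B assume "B \<in> S"
    then have "tB B \<in> atomsR \<psi>" using tBg unfolding good_def by blast
    then show "map_lterm tcls (tB B) \<in> map_lterm tcls ` atomsR \<psi>" by (rule imageI)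
  qed
  have "card S \<le> card (map_lterm tcls ` atomsR \<psi>)"
    by (rule card_inj_on_le[OF inj img]) (simp add: finite_atomsR)
  then show ?thesis by (simp add: S_def num_R_conditions_def)
qed


end
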